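(* Let $0\le\gamma_1<\dots<\gamma_p\le1$ and for each $i$ let $(\gamma_{i,n})_n$ be $[0,1]$-valued with $|\gamma_{i,n}-\gamma_i|=O(1/n)$. Then for every $i\in\{1,\dots,p\}$ there exist $\delta_i>0$ and $N\in\mathbb{N}$ such that $\phi_{n,\gamma_{i,n}}'(u)\ge\phi_{n,\gamma_{j,n}}'(u)$ for all $u\in(\gamma_i-\delta_i,\gamma_i+\delta_i)\cap[0,1]$, all $j\in\{1,\dots,p\}$ and all $n\ge N$.
   Context: $[x]$ is the integer part. $\phi_{n,\alpha}(t)=\sum_{j=1+[(n-1)\alpha]}^n\binom{n}{j}t^j(1-t)^{n-j}$, so $\phi_{n,\alpha}'(t)=n\binom{n-1}{[(n-1)\alpha]}t^{[(n-1)\alpha]}(1-t)^{n-[(n-1)\alpha]-1}$. *)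

theory Defs
  imports "HOL-Analysis.Analysis" "HOL-Library.Landau_Symbols"
begin

definition phi :: "nat \<Rightarrow> real \<Rightarrow> real \<Rightarrow> real" where
  "phi n \<alpha> t = (\<Sum>j = Suc (nat \<lfloor>real (n - 1) * \<alpha>\<rfloor>)..n.
                    real (n choose j) * t ^ j * (1 - t) ^ (n - j))"

text \<open>The derivative phi'_{n,alpha}(t), in the closed form given in the paper.\<close>
definition phi' :: "nat \<Rightarrow> real \<Rightarrow> real \<Rightarrow> real" where
  "phi' n \<alpha> t = (let k = nat \<lfloor>real (n - 1) * \<alpha>\<rfloor> in
      real n * real ((n - 1) choose k) * t ^ k * (1 - t) ^ (n - k - 1))"

end

theory Submission imports Defs begin

definition bf :: "nat \<Rightarrow> nat \<Rightarrow> real \<Rightarrow> real" where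
  "bf m k u = real (m choose k) * u ^ k * (1 - u) ^ (m - k)"

lemma choose_prod:
  assumes "a \<le> b" "b \<le> m"
  shows "real (m choose b) * (\<Prod>k\<in>{a..<b}. real (k+1)) = real (m choose a) * (\<Prod>k\<in>{a..<b}. real (m-k))"
  using assms
proof (induction b)
  case 0 then show ?case by simp
next
  case (Suc b)
  show ?case
  proof (cases "a = Suc b")
    case True then show ?thesis by simp
  next
    case False
    hence ab: "a \<le> b" using Suc by simp
    have IH: "real (m choose b) * (\<Prod>k\<in>{a..<b}. real (k+1)) = real (m choose a) * (\<Prod>k\<in>{a..<b}. real (m-k))"
      using Suc ab by simp
    have step: "real (m choose Suc b) * real (b+1) = real (m choose b) * real (m - b)"
    proof -
      have "(m - b) * (m choose b) = Suc b * (m choose Suc b)"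
        using Suc.prems by (metis binomial_absorb_comp binomial_absorption)
      then show ?thesis by (metis Suc_eq_plus1 mult.commute of_nat_mult)
    qed
    have "real (m choose Suc b) * (\<Prod>k\<in>{a..<Suc b}. real (k+1))
        = real (m choose Suc b) * real (b+1) * (\<Prod>k\<in>{a..<b}. real (k+1))"
      using ab by (simp add: prod.atLeastLessThan_Suc mult_ac)
    also have "\<dots> = real (m - b) * (real (m choose b) * (\<Prod>k\<in>{a..<b}. real (k+1)))"
      using step by (simp add: mult_ac)
    also have "\<dots> = real (m choose a) * (\<Prod>k\<in>{a..<Suc b}. real (m-k))"
      using IH ab by (simp add: prod.atLeastLessThan_Suc mult_ac)
    finally show ?thesis .
  qed
qed

lemma reduce_mono:
  assumes "a \<le> b" "b \<le> m" "0 \<le> u" "u \<le> v" "v < 1"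
    and key: "real (m choose b) * v ^ (b-a) \<le> real (m choose a) * (1-v) ^ (b-a)"
  shows "bf m b u \<le> bf m a u"
proof -
  define K where "K = b - a"
  have uv: "u * (1 - v) \<le> v * (1 - u)" using assms by (simp add: algebra_simps)
  have "(u * (1 - v)) ^ K \<le> (v * (1 - u)) ^ K"
    by (rule power_mono[OF uv]) (use assms in auto)
  hence p: "u^K * (1-v)^K \<le> v^K * (1-u)^K" by (simp add: power_mult_distrib)
  have "real (m choose b) * u^K * (1-v)^K \<le> real (m choose b) * (v^K * (1-u)^K)"
    using p by (simp add: mult_left_mono mult.assoc)
  also have "\<dots> = (real (m choose b) * v^K) * (1-u)^K" by (simp add: mult_ac)
  also have "\<dots> \<le> (real (m choose a) * (1-v)^K) * (1-u)^K"
    using key K_def assms by (intro mult_right_mono) auto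
  finally have "(real (m choose b) * u^K) * (1-v)^K \<le> (real (m choose a) * (1-u)^K) * (1-v)^K"
    by (simp add: mult_ac)
  hence c: "real (m choose b) * u^K \<le> real (m choose a) * (1-u)^K"
    using assms by (subst (asm) mult_le_cancel_right_pos) auto
  have eb: "bf m b u = (real (m choose b) * u^K) * (u^a * (1-u)^(m-b))"
    unfolding bf_def K_def using assms by (simp add: power_add[symmetric] mult_ac)
  have ea: "bf m a u = (real (m choose a) * (1-u)^K) * (u^a * (1-u)^(m-b))"
  proof -
    have "m - a = K + (m - b)" using assms K_def by simp
    then show ?thesis unfolding bf_def by (simp add: power_add mult_ac)
  qed
  show ?thesis unfolding eb ea
    by (rule mult_right_mono[OF c]) (use assms in auto)
qed


lemma pow_key:
  fixes R1 R2 :: real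
  assumes "0 \<le> R1" "0 \<le> R2" "R2 \<le> 1" "R1*R2 \<le> 1" "L \<le> H"
  shows "R1^L * R2^H \<le> 1"
proof -
  have "R1^L * R2^H = (R1*R2)^L * R2^(H-L)"
    using assms(5) by (metis le_add_diff_inverse mult.assoc power_add power_mult_distrib)
  also have "\<dots> \<le> 1 * 1"
    using assms by (intro mult_mono power_le_one) auto
  finally show ?thesis by simp
qed

lemma prod_key:
  assumes "a \<le> b" "b \<le> m" "0 < v" "v < 1" "0 \<le> R1" "0 \<le> R2" "R2 \<le> 1" "R1*R2 \<le> 1"
    and mid: "mid = a + (b-a) div 2"
    and h1: "\<And>k. a \<le> k \<Longrightarrow> k < b \<Longrightarrow> real (m-k) * v \<le> R1 * (real k + 1) * (1-v)"
    and h2: "\<And>k. mid \<le> k \<Longrightarrow> k < b \<Longrightarrow> real (m-k) * v \<le> R2 * (real k + 1) * (1-v)"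
  shows "real (m choose b) * v^(b-a) \<le> real (m choose a) * (1-v)^(b-a)"
proof -
  define R where "R k = (if k < mid then R1 else R2)" for k
  define P where "P = (\<Prod>k\<in>{a..<b}. real (k+1))"
  have Ppos: "P > 0" unfolding P_def by (intro prod_pos) auto
  have midb: "a \<le> mid" "mid \<le> b" using mid assms by auto
  have "(\<Prod>k\<in>{a..<b}. real (m-k) * v) \<le> (\<Prod>k\<in>{a..<b}. R k * (real (k+1) * (1-v)))"
  proof (rule prod_mono, safe)
    fix k assume k: "k \<in> {a..<b}"
    show "0 \<le> real (m-k) * v" using assms by auto
    show "real (m-k) * v \<le> R k * (real (k+1) * (1-v))"
      using h1[of k] h2[of k] k by (auto simp: R_def mult_ac add.commute)
  qed
  also have "\<dots> = (\<Prod>k\<in>{a..<b}. R k) * P * (1-v)^(b-a)"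
    by (simp add: prod.distrib P_def)
  also have "(\<Prod>k\<in>{a..<b}. R k) = R1^(mid-a) * R2^(b-mid)"
  proof -
    have "(\<Prod>k\<in>{a..<b}. R k) = (\<Prod>k\<in>{a..<mid}. R k) * (\<Prod>k\<in>{mid..<b}. R k)"
      using midb by (simp add: prod.atLeastLessThan_concat)
    also have "(\<Prod>k\<in>{a..<mid}. R k) = (\<Prod>k\<in>{a..<mid}. R1)" by (rule prod.cong) (auto simp: R_def)
    also have "(\<Prod>k\<in>{mid..<b}. R k) = (\<Prod>k\<in>{mid..<b}. R2)" by (rule prod.cong) (auto simp: R_def)
    finally show ?thesis by simp
  qed
  finally have A: "(\<Prod>k\<in>{a..<b}. real (m-k) * v) \<le> (R1^(mid-a) * R2^(b-mid)) * (P * (1-v)^(b-a))"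
    by (simp add: mult_ac)
  have B: "R1^(mid-a) * R2^(b-mid) \<le> 1"
    using assms by (intro pow_key) auto
  have C: "(\<Prod>k\<in>{a..<b}. real (m-k) * v) \<le> P * (1-v)^(b-a)"
  proof -
    have "0 \<le> P * (1-v)^(b-a)" using Ppos assms by auto
    from mult_right_mono[OF B this] A show ?thesis by simp
  qed
  have "(real (m choose b) * v^(b-a)) * P = real (m choose a) * (\<Prod>k\<in>{a..<b}. real (m-k) * v)"
    using choose_prod[OF assms(1,2)] by (simp add: prod.distrib P_def mult_ac)
  also have "\<dots> \<le> real (m choose a) * (P * (1-v)^(b-a))"
    using C by (intro mult_left_mono) auto
  finally have "(real (m choose b) * v^(b-a)) * P \<le> (real (m choose a) * (1-v)^(b-a)) * P"
    by (simp add: mult_ac)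
  then show ?thesis using Ppos by simp
qed


lemma lin_ev:
  fixes \<kappa> B :: real
  assumes "0 < \<kappa>"
  shows "\<exists>N::nat. \<forall>m\<ge>N. B \<le> real m * \<kappa>"
proof -
  obtain N :: nat where N: "B / \<kappa> < real N" using reals_Archimedean2 by blast
  have "B \<le> real m * \<kappa>" if "m \<ge> N" for m
  proof -
    have "B / \<kappa> \<le> real m" using N that by (meson le_less_trans less_imp_le of_nat_le_iff order.strict_trans2 linorder_not_le)
    then show ?thesis using assms by (simp add: divide_le_eq)
  qed
  then show ?thesis by blast
qed

lemma lin_step:
  fixes x v R :: real
  assumes "x \<le> real a" "a \<le> k" "k \<le> m" "0 \<le> v" "v \<le> 1" "0 \<le> R"
    and "(real m - x) * v \<le> R * (x + 1) * (1 - v)"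
  shows "real (m - k) * v \<le> R * (real k + 1) * (1 - v)"
proof -
  have "real (m - k) * v \<le> (real m - x) * v"
    using assms by (intro mult_right_mono) (auto simp: of_nat_diff)
  also have "\<dots> \<le> R * (x + 1) * (1 - v)" by fact
  also have "\<dots> \<le> R * (real k + 1) * (1 - v)"
    using assms by (intro mult_right_mono mult_left_mono) auto
  finally show ?thesis .
qed

lemma test1:
  fixes gm c v R1 :: real
  assumes "0 < gm" "gm < c" "c < 1" "0 < v" "v < 1" "R1 ^ 2 = (1-gm)*c/(gm*(1-c))"
   "0 < R1" "gm*c*(1-v)^2 > v^2*(1-gm)*(1-c)"
  shows "(1-gm)* v < R1*gm*(1-v)"
proof (rule power2_less_imp_less)
  show "0 \<le> R1*gm*(1-v)" using assms by auto
  have "((1-gm)* v)^2 = (1-gm)/(1-c) * (v^2*(1-gm)*(1-c))" using assms by (simp add: field_simps power2_eq_square)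
  also have "\<dots> < (1-gm)/(1-c) * (gm*c*(1-v)^2)" using assms by (intro mult_strict_left_mono) auto
  also have "\<dots> = ((1-gm)*c/(gm*(1-c))) * (gm^2*(1-v)^2)" using assms by (simp add: field_simps power2_eq_square)
  also have "\<dots> = (R1*gm*(1-v))^2" by (simp add: assms(6)[symmetric] power_mult_distrib)
  finally show "((1-gm)* v)^2 < (R1*gm*(1-v))^2" .
qed

lemma test2:
  fixes m x v R1 C B \<kappa>:: real
  assumes "\<kappa> = R1*gm*(1-v) - (1-gm)* v" "B = C* v - R1*(1-v)*(1-C)" "B \<le> m * \<kappa>"
  shows "(m - (m*gm - C)) * v \<le> R1 * ((m*gm - C) + 1) * (1 - v)"
proof -
  from assms(3) have "C * v - R1*(1-v)*(1-C) \<le> m*(R1*gm*(1-v) - (1-gm)* v)" by (simp add: assms(1,2))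
  then show ?thesis by (simp add: algebra_simps)
qed


lemma core_pos:
  fixes \<gamma> \<gamma>' C :: real
  assumes g0: "0 < \<gamma>" and gg: "\<gamma> < \<gamma>'" and g1: "\<gamma>' \<le> 1" and C0: "0 \<le> C"
  shows "\<exists>v. \<gamma> < v \<and> v < 1 \<and> (\<exists>N::nat. \<forall>m a b. m \<ge> N \<longrightarrow> a \<le> m \<longrightarrow> b \<le> m \<longrightarrow>
      \<bar>real a - real m * \<gamma>\<bar> \<le> C \<longrightarrow> \<bar>real b - real m * \<gamma>'\<bar> \<le> C \<longrightarrow>
      a \<le> b \<and> real (m choose b) * v ^ (b-a) \<le> real (m choose a) * (1-v) ^ (b-a))"
proof -
  define c where "c = (\<gamma> + \<gamma>') / 2"
  have c: "\<gamma> < c" "c < 1" "0 < c" using assms by (auto simp: c_def)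
  define h where "h u = \<gamma>*c*(1-u)^2 - u^2*(1-\<gamma>)*(1-c)" for u :: real
  have "h \<gamma> = \<gamma>*(1-\<gamma>)*(c-\<gamma>)" by (simp add: h_def power2_eq_square algebra_simps)
  hence hg: "h \<gamma> > 0" using c g0 by auto
  have "isCont h \<gamma>" unfolding h_def by (intro continuous_intros)
  hence "(h \<longlongrightarrow> h \<gamma>) (at \<gamma>)" by (simp add: isCont_def)
  hence "eventually (\<lambda>u. h u > 0) (at \<gamma>)" using hg by (rule order_tendstoD)
  then obtain d where d: "d > 0" "\<And>u. u \<noteq> \<gamma> \<Longrightarrow> dist u \<gamma> < d \<Longrightarrow> h u > 0"
    unfolding eventually_at by auto
  define e where "e = min (d/2) ((c-\<gamma>)/2)"
  have e1: "e > 0" unfolding e_def using d(1) c(1) by simp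
  have e2: "e \<le> d/2" unfolding e_def by (rule min.cobounded1)
  have e3: "e \<le> (c-\<gamma>)/2" unfolding e_def by (rule min.cobounded2)
  note e = e1 e2 e3
  define v where "v = \<gamma> + e"
  have v1: "\<gamma> < v" using e c g0 unfolding v_def by argo
  have v2: "v < c" using e c g0 unfolding v_def by argo
  have v3: "v < 1" using e c g0 unfolding v_def by argo
  have v4: "0 < v" using e c g0 unfolding v_def by argo
  note v = v1 v2 v3 v4
  have "v \<noteq> \<gamma>" "dist v \<gamma> < d" using e d(1) by (auto simp: v_def dist_real_def)
  hence "h v > 0" by (rule d(2))
  hence hv: "\<gamma>*c*(1-v)^2 > v^2*(1-\<gamma>)*(1-c)" by (simp add: h_def)
  define R2 where "R2 = sqrt (\<gamma>*(1-c)/((1-\<gamma>)*c))"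
  define R1 where "R1 = 1 / R2"
  have R2pos: "R2 > 0" unfolding R2_def using c g0 v by (intro real_sqrt_gt_zero divide_pos_pos mult_pos_pos) auto
  have "\<gamma>*(1-c)/((1-\<gamma>)*c) < 1" using c g0 v by (subst divide_less_eq_1_pos) (auto intro!: mult_pos_pos simp: algebra_simps)
  hence R2lt: "R2 < 1" unfolding R2_def by simp
  have R2sq: "R2^2 = \<gamma>*(1-c)/((1-\<gamma>)*c)" unfolding R2_def using c g0 v
    by (intro real_sqrt_pow2) (auto intro!: divide_nonneg_pos mult_pos_pos)
  have R1sq: "R1^2 = (1-\<gamma>)*c/(\<gamma>*(1-c))" unfolding R1_def using R2sq by (simp add: power_divide)
  have R1pos: "R1 > 0" using R2pos by (simp add: R1_def)
  have R12: "R1 * R2 = 1" using R2pos by (simp add: R1_def)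
  have k1: "(1-\<gamma>)* v < R1*\<gamma>*(1-v)"
    by (rule test1[OF g0 c(1,2) v(4,3) R1sq R1pos hv])
  have k2: "(1-c)* v < R2*c*(1-v)"
  proof (rule power2_less_imp_less)
    show "0 \<le> R2*c*(1-v)" using R2pos c v by auto
    have "((1-c)* v)^2 = (1-c)/(1-\<gamma>) * (v^2*(1-\<gamma>)*(1-c))" using c v g0 gg g1 by (simp add: field_simps power2_eq_square)
    also have "\<dots> < (1-c)/(1-\<gamma>) * (\<gamma>*c*(1-v)^2)" using c v g0 hv by (intro mult_strict_left_mono) auto
    also have "\<dots> = (\<gamma>*(1-c)/((1-\<gamma>)*c)) * (c^2*(1-v)^2)" using c v g0 by (simp add: field_simps power2_eq_square)
    also have "\<dots> = (R2*c*(1-v))^2" by (simp add: R2sq[symmetric] power_mult_distrib)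
    finally show "((1-c)* v)^2 < (R2*c*(1-v))^2" .
  qed
  define \<kappa>1 where "\<kappa>1 = R1*\<gamma>*(1-v) - (1-\<gamma>)* v"
  define \<kappa>2 where "\<kappa>2 = R2*c*(1-v) - (1-c)* v"
  define B1 where "B1 = C* v - R1*(1-v)*(1-C)"
  define B2 where "B2 = (C+1)* v + R2*C*(1-v)"
  obtain N1 :: nat where N1: "\<And>m. m \<ge> N1 \<Longrightarrow> B1 \<le> real m * \<kappa>1"
    using lin_ev[of \<kappa>1 B1] k1 by (auto simp: \<kappa>1_def)
  obtain N2 :: nat where N2: "\<And>m. m \<ge> N2 \<Longrightarrow> B2 \<le> real m * \<kappa>2"
    using lin_ev[of \<kappa>2 B2] k2 by (auto simp: \<kappa>2_def)
  obtain N3 :: nat where N3: "\<And>m. m \<ge> N3 \<Longrightarrow> 2*C+1 \<le> real m * (\<gamma>'-\<gamma>)"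
    using lin_ev[of "\<gamma>'-\<gamma>" "2*C+1"] gg by auto
  define N where "N = max N1 (max N2 N3)"
  have main: "a \<le> b \<and> real (m choose b) * v ^ (b-a) \<le> real (m choose a) * (1-v) ^ (b-a)"
    if m: "m \<ge> N" and am: "a \<le> m" and bm: "b \<le> m" and ha: "\<bar>real a - real m * \<gamma>\<bar> \<le> C"
      and hb: "\<bar>real b - real m * \<gamma>'\<bar> \<le> C" for m a b
  proof -
    have e1: "B1 \<le> real m * \<kappa>1" "B2 \<le> real m * \<kappa>2" "2*C+1 \<le> real m * (\<gamma>'-\<gamma>)"
      using N1 N2 N3 m by (auto simp: N_def)
    have "real a < real b" using ha hb e1(3) by (simp add: algebra_simps abs_le_iff)
    hence ab: "a \<le> b" by simp
    define mid where "mid = a + (b-a) div 2"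
    define x where "x = real m * \<gamma> - C"
    define y where "y = real m * c - C - 1"
    have xa: "x \<le> real a" using ha by (simp add: x_def abs_le_iff)
    have "real (b - a) \<le> 2 * real ((b-a) div 2) + 1"
    proof -
      have "b - a = 2 * ((b-a) div 2) + (b-a) mod 2" by simp
      moreover have "(b-a) mod 2 \<le> 1" by simp
      ultimately have "b - a \<le> 2 * ((b-a) div 2) + 1" by linarith
      then have "real (b - a) \<le> real (2 * ((b-a) div 2) + 1)" by (simp only: of_nat_le_iff)
      then show ?thesis by simp
    qed
    hence "real mid \<ge> (real a + real b - 1) / 2" using ab by (simp add: mid_def of_nat_diff)
    moreover have "real a + real b \<ge> real m * \<gamma> + real m * \<gamma>' - 2*C" using ha hb by (simp add: abs_le_iff)
    ultimately have ym: "y \<le> real mid" by (simp add: y_def c_def algebra_simps)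
    have c1: "(real m - x) * v \<le> R1 * (x + 1) * (1 - v)"
      unfolding x_def by (rule test2[OF \<kappa>1_def B1_def e1(1)])
    have c2: "(real m - y) * v \<le> R2 * (y + 1) * (1 - v)"
    proof -
      from e1(2) have "(C+1)* v + R2*C*(1-v) \<le> real m*(R2*c*(1-v) - (1-c)* v)" by (simp add: B2_def \<kappa>2_def)
      then show ?thesis by (simp add: y_def algebra_simps)
    qed
    have "real (m choose b) * v ^ (b-a) \<le> real (m choose a) * (1-v) ^ (b-a)"
    proof (rule prod_key[OF ab bm v(4) v(3) less_imp_le[OF R1pos] less_imp_le[OF R2pos] less_imp_le[OF R2lt] _ mid_def])
      show "R1 * R2 \<le> 1" using R12 by simp
      fix k assume "a \<le> k" "k < b"
      then show "real (m-k) * v \<le> R1 * (real k + 1) * (1-v)"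
        by (intro lin_step[OF xa _ _ _ _ _ c1]) (use bm v R1pos in auto)
    next
      fix k assume "mid \<le> k" "k < b"
      then show "real (m-k) * v \<le> R2 * (real k + 1) * (1-v)"
        by (intro lin_step[OF ym _ _ _ _ _ c2]) (use bm v R2pos in auto)
    qed
    with ab show ?thesis by blast
  qed
  show ?thesis using v main by blast
qed


lemma core_zero:
  fixes \<gamma>' C :: real
  assumes gp: "0 < \<gamma>'" and g1: "\<gamma>' \<le> 1" and C0: "0 \<le> C"
  shows "\<exists>v. 0 < v \<and> v < 1 \<and> (\<exists>N::nat. \<forall>m a b. m \<ge> N \<longrightarrow> a \<le> m \<longrightarrow> b \<le> m \<longrightarrow>
      \<bar>real a - real m * 0\<bar> \<le> C \<longrightarrow> \<bar>real b - real m * \<gamma>'\<bar> \<le> C \<longrightarrow>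
      a \<le> b \<and> real (m choose b) * v ^ (b-a) \<le> real (m choose a) * (1-v) ^ (b-a))"
proof -
  define d where "d = nat \<lceil>2/\<gamma>'\<rceil>"
  have "real d \<ge> 2/\<gamma>'" unfolding d_def by linarith
  hence dg: "real d * \<gamma>' \<ge> 2" using gp by (simp add: field_simps)
  define v :: real where "v = (1/2)^(d+1)"
  have v0: "0 < v" by (simp add: v_def)
  have vh: "v \<le> 1/2" unfolding v_def by (simp add: power_le_one)
  hence v1: "v < 1" by simp
  have vd: "v \<le> (1/2)^d * (1-v)"
  proof -
    have "v = (1/2)^d * (1/2)" by (simp add: v_def)
    also have "\<dots> \<le> (1/2)^d * (1-v)" using vh by (intro mult_left_mono) auto
    finally show ?thesis .
  qed
  obtain N1 :: nat where N1: "\<And>m. m \<ge> N1 \<Longrightarrow> 2*C+1 \<le> real m * \<gamma>'"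
    using lin_ev[of \<gamma>' "2*C+1"] gp by auto
  obtain N2 :: nat where N2: "\<And>m. m \<ge> N2 \<Longrightarrow> 2*real d*C \<le> real m * 1"
    using lin_ev[of 1 "2*real d*C"] by auto
  have main: "a \<le> b \<and> real (m choose b) * v ^ (b-a) \<le> real (m choose a) * (1-v) ^ (b-a)"
    if m: "m \<ge> max N1 N2" and am: "a \<le> m" and bm: "b \<le> m" and ha: "\<bar>real a - real m * 0\<bar> \<le> C"
      and hb: "\<bar>real b - real m * \<gamma>'\<bar> \<le> C" for m a b
  proof -
    have e1: "2*C+1 \<le> real m * \<gamma>'" "2*real d*C \<le> real m" using N1 N2 m by auto
    have "real a < real b" using ha hb e1(1) by (simp add: algebra_simps abs_le_iff)
    hence ab: "a \<le> b" by simp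
    define K where "K = b - a"
    have rK: "real K \<ge> real m * \<gamma>' - 2*C" using ha hb ab by (simp add: K_def of_nat_diff abs_le_iff)
    have "real d * real K \<ge> real d * (real m * \<gamma>' - 2*C)" using rK by (intro mult_left_mono) auto
    moreover have "real d * (real m * \<gamma>' - 2*C) = real m * (real d * \<gamma>') - 2*real d*C" by (simp add: algebra_simps)
    moreover have "real m * (real d * \<gamma>') \<ge> real m * 2" using dg by (intro mult_left_mono) auto
    ultimately have "real (d*K) \<ge> real m" using e1(2) by simp
    hence dK: "d*K \<ge> m" by (simp only: of_nat_le_iff)
    have "real (m choose b) * v^K \<le> 2^m * ((1/2)^d * (1-v))^K"
      using v0 vd by (intro mult_mono power_mono) (auto simp: binomial_le_pow2 simp del: of_nat_power intro!: order.trans[OF _ of_nat_mono[OF binomial_le_pow2]])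
    also have "\<dots> = (2^m * (1/2)^(d*K)) * (1-v)^K" by (simp add: power_mult_distrib power_mult)
    also have "2^m * (1/2::real)^(d*K) = (1/2)^(d*K - m)"
    proof -
      have "(1/2::real)^(d*K) = (1/2)^(d*K-m) * (1/2)^m" using dK by (simp add: power_add[symmetric])
      then show ?thesis by (simp add: power_one_over)
    qed
    also have "(1/2::real)^(d*K - m) * (1-v)^K \<le> 1 * (1-v)^K"
      using v1 by (intro mult_right_mono power_le_one) auto
    also have "\<dots> \<le> real (m choose a) * (1-v)^K"
    proof -
      have "(1::real) \<le> real (m choose a)" using am by (simp add: Suc_le_eq)
      then show ?thesis using v1 by (intro mult_right_mono) auto
    qed
    finally show ?thesis using ab by (simp add: K_def)
  qed
  show ?thesis using v0 v1 main by blast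
qed


lemma core_bf:
  fixes \<gamma> \<gamma>' C :: real
  assumes "0 \<le> \<gamma>" "\<gamma> < \<gamma>'" "\<gamma>' \<le> 1" "0 \<le> C"
  shows "\<exists>\<delta>>0. \<exists>N::nat. \<forall>m a b u. m \<ge> N \<longrightarrow> a \<le> m \<longrightarrow> b \<le> m \<longrightarrow>
      \<bar>real a - real m * \<gamma>\<bar> \<le> C \<longrightarrow> \<bar>real b - real m * \<gamma>'\<bar> \<le> C \<longrightarrow> 0 \<le> u \<longrightarrow> u < \<gamma> + \<delta> \<longrightarrow>
      bf m b u \<le> bf m a u"
proof -
  have "\<exists>v. \<gamma> < v \<and> v < 1 \<and> (\<exists>N::nat. \<forall>m a b. m \<ge> N \<longrightarrow> a \<le> m \<longrightarrow> b \<le> m \<longrightarrow>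
      \<bar>real a - real m * \<gamma>\<bar> \<le> C \<longrightarrow> \<bar>real b - real m * \<gamma>'\<bar> \<le> C \<longrightarrow>
      a \<le> b \<and> real (m choose b) * v ^ (b-a) \<le> real (m choose a) * (1-v) ^ (b-a))"
  proof (cases "\<gamma> = 0")
    case True
    then show ?thesis using core_zero[of \<gamma>' C] assms by auto
  next
    case False
    then show ?thesis using core_pos[of \<gamma> \<gamma>' C] assms by auto
  qed
  then obtain v N where v: "\<gamma> < v" "v < 1" and N: "\<And>m a b. m \<ge> N \<Longrightarrow> a \<le> m \<Longrightarrow> b \<le> m \<Longrightarrow>
      \<bar>real a - real m * \<gamma>\<bar> \<le> C \<Longrightarrow> \<bar>real b - real m * \<gamma>'\<bar> \<le> C \<Longrightarrow>
      a \<le> b \<and> real (m choose b) * v ^ (b-a) \<le> real (m choose a) * (1-v) ^ (b-a)" by blast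
  have "bf m b u \<le> bf m a u" if "m \<ge> N" "a \<le> m" "b \<le> m" "\<bar>real a - real m * \<gamma>\<bar> \<le> C"
     "\<bar>real b - real m * \<gamma>'\<bar> \<le> C" "0 \<le> u" "u < \<gamma> + (v - \<gamma>)" for m a b u
  proof -
    from N[OF that(1-5)] have "a \<le> b" "real (m choose b) * v ^ (b-a) \<le> real (m choose a) * (1-v) ^ (b-a)" by auto
    then show ?thesis using that v by (intro reduce_mono) auto
  qed
  moreover have "v - \<gamma> > 0" using v by simp
  ultimately show ?thesis by blast
qed

lemma phi'_bf: "phi' n \<alpha> u = real n * bf (n-1) (nat \<lfloor>real (n-1) * \<alpha>\<rfloor>) u"
  by (simp add: phi'_def bf_def Let_def diff_commute mult.assoc)

lemma bf_sym: "k \<le> m \<Longrightarrow> bf m k u = bf m (m-k) (1-u)"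
  unfolding bf_def by (simp add: binomial_symmetric[of k m] mult_ac)

lemma floor_bound:
  fixes gg :: "nat \<Rightarrow> real" and \<gamma> :: real
  assumes "(\<lambda>n. gg n - \<gamma>) \<in> O(\<lambda>n. 1 / real n)" "\<And>n. 0 \<le> gg n \<and> gg n \<le> 1"
  shows "\<exists>C\<ge>0. \<exists>N::nat. \<forall>n\<ge>N. nat \<lfloor>real (n-1) * gg n\<rfloor> \<le> n - 1 \<and>
     \<bar>real (nat \<lfloor>real (n-1) * gg n\<rfloor>) - real (n-1) * \<gamma>\<bar> \<le> C"
proof -
  obtain c where c: "c > 0" "eventually (\<lambda>n. norm (gg n - \<gamma>) \<le> c * norm (1 / real n)) at_top"
    using assms(1) by (elim landau_o.bigE)
  then obtain N0 where N0: "\<And>n. n \<ge> N0 \<Longrightarrow> norm (gg n - \<gamma>) \<le> c * norm (1 / real n)"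
    unfolding eventually_at_top_linorder by blast
  have "nat \<lfloor>real (n-1) * gg n\<rfloor> \<le> n - 1 \<and>
     \<bar>real (nat \<lfloor>real (n-1) * gg n\<rfloor>) - real (n-1) * \<gamma>\<bar> \<le> c + 1" if n: "n \<ge> max N0 1" for n
  proof -
    define x where "x = real (n-1) * gg n"
    have x0: "0 \<le> x" using assms(2)[of n] by (simp add: x_def)
    have x1: "x \<le> real (n-1)" using assms(2)[of n] by (simp add: x_def mult_left_le)
    have rk: "real (nat \<lfloor>x\<rfloor>) = of_int \<lfloor>x\<rfloor>" using x0 by simp
    have fl: "of_int \<lfloor>x\<rfloor> \<le> x" "x < of_int \<lfloor>x\<rfloor> + 1" by linarith+
    have le: "nat \<lfloor>x\<rfloor> \<le> n - 1"
    proof -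
      have "of_int \<lfloor>x\<rfloor> \<le> real (n-1)" using fl x1 by linarith
      then have "real (nat \<lfloor>x\<rfloor>) \<le> real (n-1)" using rk by simp
      then show ?thesis by (simp only: of_nat_le_iff)
    qed
    have "\<bar>gg n - \<gamma>\<bar> \<le> c / real n" using N0[of n] n by (simp add: divide_inverse)
    hence "real (n-1) * \<bar>gg n - \<gamma>\<bar> \<le> real (n-1) * (c / real n)" by (intro mult_left_mono) auto
    also have "\<dots> \<le> c"
    proof -
      have "real (n-1) \<le> real n" by simp
      hence "real (n-1) * c \<le> real n * c" using c by (intro mult_right_mono) auto
      then show ?thesis using n by (simp add: field_simps)
    qed
    finally have "\<bar>x - real (n-1) * \<gamma>\<bar> \<le> c"
      by (simp add: x_def abs_mult right_diff_distrib[symmetric])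
    hence "\<bar>real (nat \<lfloor>x\<rfloor>) - real (n-1) * \<gamma>\<bar> \<le> c + 1" using rk fl by (simp add: abs_le_iff) linarith
    then show ?thesis using le by (simp add: x_def)
  qed
  moreover have "c + 1 \<ge> 0" using c by simp
  ultimately show ?thesis by blast
qed


lemma fin_combine:
  assumes "finite J" "\<forall>j\<in>J. \<exists>\<delta>>0. \<exists>N::nat. Q j \<delta> N"
    and mono: "\<And>j \<delta> \<delta>' N N'. Q j \<delta> N \<Longrightarrow> 0 < \<delta>' \<Longrightarrow> \<delta>' \<le> \<delta> \<Longrightarrow> N \<le> N' \<Longrightarrow> Q j \<delta>' N'"
  shows "\<exists>\<delta>>(0::real). \<exists>N::nat. \<forall>j\<in>J. Q j \<delta> N"
  using assms(1,2)
proof (induction J rule: finite_induct)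
  case empty
  then show ?case by (rule_tac x=1 in exI) auto
next
  case (insert x F)
  then obtain \<delta>1 N1 where 1: "\<delta>1 > 0" "\<forall>j\<in>F. Q j \<delta>1 N1" by auto
  from insert obtain \<delta>2 N2 where 2: "\<delta>2 > 0" "Q x \<delta>2 N2" by auto
  have "\<forall>j\<in>insert x F. Q j (min \<delta>1 \<delta>2) (max N1 N2)"
    using 1 2 by (auto intro: mono)
  moreover have "min \<delta>1 \<delta>2 > 0" using 1 2 by simp
  ultimately show ?case by blast
qed

theorem lemma5p1:
  fixes p :: nat and \<gamma> :: "nat \<Rightarrow> real" and g :: "nat \<Rightarrow> nat \<Rightarrow> real"
  assumes range: "\<And>i. i \<in> {1..p} \<Longrightarrow> 0 \<le> \<gamma> i \<and> \<gamma> i \<le> 1"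
    and incr: "\<And>i j. i \<in> {1..p} \<Longrightarrow> j \<in> {1..p} \<Longrightarrow> i < j \<Longrightarrow> \<gamma> i < \<gamma> j"
    and grange: "\<And>i n. i \<in> {1..p} \<Longrightarrow> 0 \<le> g i n \<and> g i n \<le> 1"
    and rate: "\<And>i. i \<in> {1..p} \<Longrightarrow> (\<lambda>n. g i n - \<gamma> i) \<in> O(\<lambda>n. 1 / real n)"
  shows "\<forall>i\<in>{1..p}. \<exists>\<delta>>0. \<exists>N::nat. \<forall>u. u \<in> {\<gamma> i - \<delta> <..< \<gamma> i + \<delta>} \<inter> {0..1} \<longrightarrow>
           (\<forall>j\<in>{1..p}. \<forall>n\<ge>N. phi' n (g i n) u \<ge> phi' n (g j n) u)"
proof
  fix i assume i: "i \<in> {1..p}"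
  define k where "k j n = nat \<lfloor>real (n-1) * g j n\<rfloor>" for j n
  have fb: "\<exists>C\<ge>0. \<exists>N::nat. \<forall>n\<ge>N. k j n \<le> n - 1 \<and> \<bar>real (k j n) - real (n-1) * \<gamma> j\<bar> \<le> C"
    if "j \<in> {1..p}" for j
    unfolding k_def by (rule floor_bound[OF rate[OF that] grange[OF that]])
  define Q where "Q j \<delta> N = (\<forall>u n. u \<in> {\<gamma> i - \<delta> <..< \<gamma> i + \<delta>} \<inter> {0..1} \<longrightarrow> n \<ge> N \<longrightarrow>
      phi' n (g j n) u \<le> phi' n (g i n) u)" for j \<delta> N
  have pair: "\<exists>\<delta>>0. \<exists>N::nat. Q j \<delta> N" if j: "j \<in> {1..p}" for j
  proof -
    obtain Ci Ni where Ci: "Ci \<ge> 0" "\<And>n. n \<ge> Ni \<Longrightarrow> k i n \<le> n - 1 \<and> \<bar>real (k i n) - real (n-1) * \<gamma> i\<bar> \<le> Ci"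
      using fb[OF i] by blast
    obtain Cj Nj where Cj: "Cj \<ge> 0" "\<And>n. n \<ge> Nj \<Longrightarrow> k j n \<le> n - 1 \<and> \<bar>real (k j n) - real (n-1) * \<gamma> j\<bar> \<le> Cj"
      using fb[OF j] by blast
    have ph: "phi' n (g l n) u = real n * bf (n-1) (k l n) u" for l n u
      by (simp add: phi'_bf k_def)
    consider "i = j" | "i < j" | "j < i" by linarith
    then show ?thesis
    proof cases
      case 1
      then show ?thesis by (rule_tac x=1 in exI) (auto simp: Q_def)
    next
      case 2
      have g: "0 \<le> \<gamma> i" "\<gamma> i < \<gamma> j" "\<gamma> j \<le> 1" using range[OF i] range[OF j] incr[OF i j 2] by auto
      obtain \<delta> N0 where d: "\<delta> > 0" and N0: "\<And>m a b u. m \<ge> N0 \<Longrightarrow> a \<le> m \<Longrightarrow> b \<le> m \<Longrightarrow>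
        \<bar>real a - real m * \<gamma> i\<bar> \<le> Ci + Cj \<Longrightarrow> \<bar>real b - real m * \<gamma> j\<bar> \<le> Ci + Cj \<Longrightarrow> 0 \<le> u \<Longrightarrow>
        u < \<gamma> i + \<delta> \<Longrightarrow> bf m b u \<le> bf m a u"
        using core_bf[OF g add_nonneg_nonneg[OF Ci(1) Cj(1)]] by blast
      have "Q j \<delta> (max (N0+1) (max Ni Nj))"
        unfolding Q_def
      proof (intro allI impI)
        fix u n assume u: "u \<in> {\<gamma> i - \<delta><..<\<gamma> i + \<delta>} \<inter> {0..1}" and n: "max (N0+1) (max Ni Nj) \<le> n"
        have "bf (n-1) (k j n) u \<le> bf (n-1) (k i n) u"
          using Ci(2)[of n] Cj(2)[of n] n u Ci(1) Cj(1) by (intro N0) auto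
        then show "phi' n (g j n) u \<le> phi' n (g i n) u" unfolding ph by (intro mult_left_mono) auto
      qed
      then show ?thesis using d by blast
    next
      case 3
      have g: "0 \<le> 1 - \<gamma> i" "1 - \<gamma> i < 1 - \<gamma> j" "1 - \<gamma> j \<le> 1"
        using range[OF i] range[OF j] incr[OF j i 3] by auto
      obtain \<delta> N0 where d: "\<delta> > 0" and N0: "\<And>m a b u. m \<ge> N0 \<Longrightarrow> a \<le> m \<Longrightarrow> b \<le> m \<Longrightarrow>
        \<bar>real a - real m * (1 - \<gamma> i)\<bar> \<le> Ci + Cj \<Longrightarrow> \<bar>real b - real m * (1 - \<gamma> j)\<bar> \<le> Ci + Cj \<Longrightarrow> 0 \<le> u \<Longrightarrow>
        u < (1 - \<gamma> i) + \<delta> \<Longrightarrow> bf m b u \<le> bf m a u"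
        using core_bf[OF g add_nonneg_nonneg[OF Ci(1) Cj(1)]] by blast
      have refl: "\<bar>real (m - kk) - real m * (1 - gg)\<bar> = \<bar>real kk - real m * gg\<bar>" if "kk \<le> m" for m kk and gg :: real
        using that by (simp add: of_nat_diff algebra_simps abs_minus_commute)
      have "Q j \<delta> (max (N0+1) (max Ni Nj))"
        unfolding Q_def
      proof (intro allI impI)
        fix u n assume u: "u \<in> {\<gamma> i - \<delta><..<\<gamma> i + \<delta>} \<inter> {0..1}" and n: "max (N0+1) (max Ni Nj) \<le> n"
        have ki: "k i n \<le> n - 1" "\<bar>real (k i n) - real (n-1) * \<gamma> i\<bar> \<le> Ci" using Ci(2)[of n] n by auto
        have kj: "k j n \<le> n - 1" "\<bar>real (k j n) - real (n-1) * \<gamma> j\<bar> \<le> Cj" using Cj(2)[of n] n by auto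
        have "bf (n-1) (n-1 - k j n) (1-u) \<le> bf (n-1) (n-1 - k i n) (1-u)"
        proof (rule N0)
          show "N0 \<le> n - 1" using n by auto
          show "\<bar>real (n - 1 - k i n) - real (n - 1) * (1 - \<gamma> i)\<bar> \<le> Ci + Cj"
            using refl[OF ki(1)] ki(2) Cj(1) by simp
          show "\<bar>real (n - 1 - k j n) - real (n - 1) * (1 - \<gamma> j)\<bar> \<le> Ci + Cj"
            using refl[OF kj(1)] kj(2) Ci(1) by simp
          show "0 \<le> 1 - u" using u by auto
          show "1 - u < 1 - \<gamma> i + \<delta>" using u by auto
        qed auto
        hence "bf (n-1) (k j n) u \<le> bf (n-1) (k i n) u" using bf_sym[OF ki(1)] bf_sym[OF kj(1)] by simp
        then show "phi' n (g j n) u \<le> phi' n (g i n) u" unfolding ph by (intro mult_left_mono) auto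
      qed
      then show ?thesis using d by blast
    qed
  qed
  have "\<exists>\<delta>>(0::real). \<exists>N::nat. \<forall>j\<in>{1..p}. Q j \<delta> N"
  proof (rule fin_combine)
    show "finite {1..p}" by simp
    show "\<forall>j\<in>{1..p}. \<exists>\<delta>>0. \<exists>N. Q j \<delta> N" using pair by blast
  next
    fix j \<delta> \<delta>' and N N' :: nat assume "Q j \<delta> N" "0 < \<delta>'" "\<delta>' \<le> \<delta>" "N \<le> N'"
    then show "Q j \<delta>' N'" unfolding Q_def
    proof (intro allI impI)
      fix u n assume h: "\<forall>u n. u \<in> {\<gamma> i - \<delta><..<\<gamma> i + \<delta>} \<inter> {0..1} \<longrightarrow> N \<le> n \<longrightarrow> phi' n (g j n) u \<le> phi' n (g i n) u"
        and dd: "\<delta>' \<le> \<delta>" "N \<le> N'" and u: "u \<in> {\<gamma> i - \<delta>'<..<\<gamma> i + \<delta>'} \<inter> {0..1}" and n: "N' \<le> n"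
      have "u \<in> {\<gamma> i - \<delta><..<\<gamma> i + \<delta>} \<inter> {0..1}" using u dd by auto
      moreover have "N \<le> n" using n dd by simp
      ultimately show "phi' n (g j n) u \<le> phi' n (g i n) u" using h by blast
    qed
  qed
  then show "\<exists>\<delta>>0. \<exists>N::nat. \<forall>u. u \<in> {\<gamma> i - \<delta> <..< \<gamma> i + \<delta>} \<inter> {0..1} \<longrightarrow>
           (\<forall>j\<in>{1..p}. \<forall>n\<ge>N. phi' n (g i n) u \<ge> phi' n (g j n) u)"
    unfolding Q_def by blast
qed

end
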